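(* Let $p$ be the POP of length 4 defined by the relations $1>2$ and $1>4$ (label $3$ isolated), and let $a(n)=|S_n(p)|$. Then $$\sum_{n\geq 0}a(n)x^n=\frac{(1-x)^2}{1-3x+2x^2-2x^3}.$$
   Context: An $n$-permutation is a word $\pi=\pi_1\cdots\pi_n$ containing each of $1,\ldots,n$ exactly once; $S_n$ is the set of $n$-permutations ($S_0$ consists of the empty permutation). A partially ordered pattern (POP) $p$ of length $k$ is a partial order on the label set $\{1,\ldots,k\}$; it is described by a set of generating relations, where a relation $x>y$ means that in an occurrence the entry in the $x$-th chosen position must be larger than the entry in the $y$-th chosen position, and labels not involved in any relation are unconstrained. An $n$-permutation $\pi$ contains $p$ if there are indices $1\leq i_1<\cdots<i_k\leq n$ such that $\pi_{i_x}>\pi_{i_y}$ whenever $x>y$ in the partial order; otherwise $\pi$ avoids $p$. $S_n(p)$ denotes the set of $n$-permutations avoiding $p$. *)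

theory Defs
  imports Main "HOL-Computational_Algebra.Formal_Power_Series"
begin

text \<open>n-permutations as words pi_1 ... pi_n (list index j holds pi_(j+1)).\<close>
definition perms :: "nat \<Rightarrow> nat list set" where
  "perms n = {xs. distinct xs \<and> set xs = {1..n}}"

text \<open>A POP of length k is given by a set R of generating relations (x,y) meaning x > y,
  with labels in 1..k. w contains the POP if there are positions
  1 <= i_1 < ... < i_k <= n with pi_(i_x) > pi_(i_y) for every relation (x,y).\<close>
definition contains_pop :: "nat \<Rightarrow> (nat \<times> nat) set \<Rightarrow> nat list \<Rightarrow> bool" where
  "contains_pop k R w \<longleftrightarrow>
     (\<exists>i :: nat \<Rightarrow> nat.
        (\<forall>x\<in>{1..k}. 1 \<le> i x \<and> i x \<le> length w) \<and>
        (\<forall>x y. 1 \<le> x \<and> x < y \<and> y \<le> k \<longrightarrow> i x < i y) \<and>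
        (\<forall>(x, y)\<in>R. w ! (i x - 1) > w ! (i y - 1)))"

definition avoiders :: "nat \<Rightarrow> (nat \<times> nat) set \<Rightarrow> nat \<Rightarrow> nat list set" where
  "avoiders k R n = {w \<in> perms n. \<not> contains_pop k R w}"

end

theory Submission
  imports Defs
begin

fun aa :: "nat \<Rightarrow> nat" and bb :: "nat \<Rightarrow> nat" where
  "aa 0 = 1"
| "aa (Suc m) = aa m + (if 1 \<le> m then aa m else 0) + bb m"
| "bb 0 = 0"
| "bb (Suc 0) = 0"
| "bb (Suc (Suc m)) = 2 * aa m + bb (Suc m)"

definition ok :: "nat \<Rightarrow> nat list \<Rightarrow> bool" where
  "ok x xs \<longleftrightarrow> \<not> (\<exists>j k. j + 1 < k \<and> k < length xs \<and> xs ! j < x \<and> xs ! k < x)"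

fun good :: "nat list \<Rightarrow> bool" where
  "good [] = True"
| "good (x # xs) = (ok x xs \<and> good xs)"

definition AA :: "nat set \<Rightarrow> nat list set" where
  "AA U = {w. distinct w \<and> set w = U \<and> good w}"

definition bad3 :: "nat list \<Rightarrow> bool" where
  "bad3 w \<longleftrightarrow> (\<exists>a j k. a < j \<and> j + 1 < k \<and> k < length w \<and> w ! j < w ! a \<and> w ! k < w ! a)"

lemma bad3_Cons: "bad3 (x # xs) \<longleftrightarrow> \<not> ok x xs \<or> bad3 xs"
proof
  assume "bad3 (x # xs)"
  then obtain a j k where h: "a < j" "j + 1 < k" "k < length (x # xs)"
    "(x # xs) ! j < (x # xs) ! a" "(x # xs) ! k < (x # xs) ! a"
    unfolding bad3_def by blast
  obtain j' where j: "j = Suc j'" using h(1) by (cases j) auto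
  obtain k' where k: "k = Suc k'" using h(2) by (cases k) auto
  show "\<not> ok x xs \<or> bad3 xs"
  proof (cases a)
    case 0
    then have "\<not> ok x xs" using h unfolding ok_def j k by auto
    then show ?thesis by blast
  next
    case (Suc a')
    then have "bad3 xs" using h unfolding bad3_def j k
      by (intro exI[of _ a'] exI[of _ j'] exI[of _ k']) auto
    then show ?thesis by blast
  qed
next
  assume "\<not> ok x xs \<or> bad3 xs"
  then show "bad3 (x # xs)"
  proof
    assume "\<not> ok x xs"
    then obtain j k where "j + 1 < k" "k < length xs" "xs ! j < x" "xs ! k < x"
      unfolding ok_def by blast
    then show ?thesis unfolding bad3_def
      by (intro exI[of _ 0] exI[of _ "Suc j"] exI[of _ "Suc k"]) auto
  next
    assume "bad3 xs"
    then obtain a j k where "a < j" "j + 1 < k" "k < length xs" "xs ! j < xs ! a" "xs ! k < xs ! a"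
      unfolding bad3_def by blast
    then show ?thesis unfolding bad3_def
      by (intro exI[of _ "Suc a"] exI[of _ "Suc j"] exI[of _ "Suc k"]) auto
  qed
qed

lemma good_iff: "good w \<longleftrightarrow> \<not> bad3 w"
proof (induction w)
  case Nil then show ?case by (simp add: bad3_def)
next
  case (Cons x xs) then show ?case by (simp add: bad3_Cons)
qed

lemma contains_iff: "contains_pop 4 {(1, 2), (1, 4)} w \<longleftrightarrow> bad3 w"
proof
  assume "contains_pop 4 {(1, 2), (1, 4)} w"
  then obtain i :: "nat \<Rightarrow> nat" where
    r: "\<forall>x\<in>{1..4}. 1 \<le> i x \<and> i x \<le> length w"
    and m: "\<forall>x y. 1 \<le> x \<and> x < y \<and> y \<le> 4 \<longrightarrow> i x < i y"
    and c: "\<forall>(x, y)\<in>{(1::nat, 2::nat), (1, 4)}. w ! (i x - 1) > w ! (i y - 1)"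
    unfolding contains_pop_def by blast
  have "i 1 < i 2" "i 2 < i 3" "i 3 < i 4" using m by auto
  moreover have "1 \<le> i 1" "i 4 \<le> length w" using r by auto
  moreover have "w ! (i 1 - 1) > w ! (i 2 - 1)" "w ! (i 1 - 1) > w ! (i 4 - 1)" using c by auto
  ultimately show "bad3 w" unfolding bad3_def
    by (intro exI[of _ "i 1 - 1"] exI[of _ "i 2 - 1"] exI[of _ "i 4 - 1"]) auto
next
  assume "bad3 w"
  then obtain a j k where h: "a < j" "j + 1 < k" "k < length w" "w ! j < w ! a" "w ! k < w ! a"
    unfolding bad3_def by blast
  define i where "i = (\<lambda>t::nat. if t = 1 then a + 1 else if t = 2 then j + 1 else if t = 3 then j + 2 else k + 1)"
  have "(\<forall>x\<in>{1..4}. 1 \<le> i x \<and> i x \<le> length w)"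
    using h unfolding i_def by auto
  moreover have "\<forall>x y. 1 \<le> x \<and> x < y \<and> y \<le> (4::nat) \<longrightarrow> i x < i y"
  proof (intro allI impI)
    fix x y :: nat assume "1 \<le> x \<and> x < y \<and> y \<le> 4"
    then have "x = 1 \<and> y = 2 \<or> x = 1 \<and> y = 3 \<or> x = 1 \<and> y = 4 \<or> x = 2 \<and> y = 3 \<or> x = 2 \<and> y = 4 \<or> x = 3 \<and> y = 4"
      by auto
    then show "i x < i y" using h unfolding i_def by auto
  qed
  moreover have "\<forall>(x, y)\<in>{(1::nat, 2::nat), (1, 4)}. w ! (i x - 1) > w ! (i y - 1)"
    using h unfolding i_def by auto
  ultimately show "contains_pop 4 {(1, 2), (1, 4)} w" unfolding contains_pop_def by blast
qed

lemma avoiders_AA: "avoiders 4 {(1, 2), (1, 4)} n = AA {1..n}"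
  unfolding avoiders_def perms_def AA_def contains_iff good_iff by auto

lemma finite_AA: "finite U \<Longrightarrow> finite (AA U)"
proof -
  assume "finite U"
  have "AA U \<subseteq> {xs. set xs \<subseteq> U \<and> length xs = card U}"
    unfolding AA_def using distinct_card by fastforce
  moreover have "finite {xs. set xs \<subseteq> U \<and> length xs = card U}"
    using \<open>finite U\<close> by (rule finite_lists_length_eq)
  ultimately show ?thesis by (rule finite_subset)
qed

lemma card_decomp:
  assumes "finite U" "U \<noteq> {}"
  shows "card {ys \<in> AA U. Q ys} = (\<Sum>c\<in>U. card {zs \<in> AA (U - {c}). ok c zs \<and> Q (c # zs)})"
proof -
  define F where "F = (\<lambda>c. {zs \<in> AA (U - {c}). ok c zs \<and> Q (c # zs)})"
  have eq: "{ys \<in> AA U. Q ys} = (\<Union>c\<in>U. Cons c ` F c)"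
  proof (intro equalityI subsetI)
    fix ys assume ys: "ys \<in> {ys \<in> AA U. Q ys}"
    then have h: "distinct ys" "set ys = U" "good ys" "Q ys" unfolding AA_def by auto
    then have "ys \<noteq> []" using assms(2) by auto
    then obtain c zs where yz: "ys = c # zs" by (cases ys) auto
    have "c \<in> U" using h(2) yz by auto
    moreover have "zs \<in> F c" unfolding F_def AA_def using h yz by auto
    ultimately show "ys \<in> (\<Union>c\<in>U. Cons c ` F c)" using yz by blast
  next
    fix ys assume "ys \<in> (\<Union>c\<in>U. Cons c ` F c)"
    then obtain c zs where c: "c \<in> U" "zs \<in> F c" "ys = c # zs" by blast
    then have "distinct zs" "set zs = U - {c}" "good zs" "ok c zs" "Q (c # zs)"
      unfolding F_def AA_def by auto
    then show "ys \<in> {ys \<in> AA U. Q ys}" unfolding AA_def using c by auto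
  qed
  have fin: "finite (F c)" for c unfolding F_def using finite_AA[of "U - {c}"] assms(1) by auto
  have "card (\<Union>c\<in>U. Cons c ` F c) = (\<Sum>c\<in>U. card (Cons c ` F c))"
  proof (rule card_UN_disjoint)
    show "finite U" by (rule assms(1))
    show "\<forall>c\<in>U. finite (Cons c ` F c)" using fin by blast
    show "\<forall>i\<in>U. \<forall>j\<in>U. i \<noteq> j \<longrightarrow> Cons i ` F i \<inter> Cons j ` F j = {}" by blast
  qed
  also have "\<dots> = (\<Sum>c\<in>U. card (F c))"
    by (intro sum.cong refl card_image) (simp add: inj_on_def)
  finally show ?thesis using eq unfolding F_def by simp
qed

lemma card_pos_set:
  assumes "distinct zs"
  shows "card {j. j < length zs \<and> zs ! j < c} = card {z \<in> set zs. z < c}"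
proof -
  have img: "nth zs ` {j. j < length zs \<and> zs ! j < c} = {z \<in> set zs. z < c}"
    by (auto simp: in_set_conv_nth)
  have inj: "inj_on (nth zs) {j. j < length zs \<and> zs ! j < c}"
    using assms by (auto simp: inj_on_def nth_eq_iff_index_eq)
  show ?thesis using card_image[OF inj] unfolding img by simp
qed

lemma ok_fail:
  assumes "distinct zs" "card {z \<in> set zs. z < c} \<ge> 3"
  shows "\<not> ok c zs"
proof
  assume ok: "ok c zs"
  define P where "P = {j. j < length zs \<and> zs ! j < c}"
  have cP: "card P \<ge> 3" using card_pos_set[OF assms(1)] assms(2) unfolding P_def by simp
  have fP: "finite P" unfolding P_def by auto
  have "P \<noteq> {}" using cP by auto
  define m where "m = Min P"
  have "P \<subseteq> {m, m + 1}"
  proof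
    fix k assume "k \<in> P"
    have "m \<in> P" "m \<le> k" using fP \<open>P \<noteq> {}\<close> \<open>k \<in> P\<close> unfolding m_def by auto
    then have "\<not> (m + 1 < k)" using ok \<open>k \<in> P\<close> unfolding ok_def P_def by blast
    then show "k \<in> {m, m + 1}" using \<open>m \<le> k\<close> by auto
  qed
  then have "card P \<le> card {m, m + 1}" by (intro card_mono) auto
  also have "\<dots> \<le> 2" by (simp add: card_insert_if)
  finally show False using cP by simp
qed

lemma ok_triv:
  assumes "distinct zs" "card {z \<in> set zs. z < c} \<le> 1"
  shows "ok c zs"
  unfolding ok_def
proof
  assume "\<exists>j k. j + 1 < k \<and> k < length zs \<and> zs ! j < c \<and> zs ! k < c"
  then obtain j k where h: "j + 1 < k" "k < length zs" "zs ! j < c" "zs ! k < c" by blast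
  have "zs ! j \<noteq> zs ! k" using h assms(1) by (simp add: nth_eq_iff_index_eq)
  have "{zs ! j, zs ! k} \<subseteq> {z \<in> set zs. z < c}" using h by auto
  then have "card {zs ! j, zs ! k} \<le> card {z \<in> set zs. z < c}" by (intro card_mono) auto
  then show False using \<open>zs ! j \<noteq> zs ! k\<close> assms(2) by simp
qed

lemma ok_cong:
  assumes h: "\<forall>z\<in>set zs. z < x \<longleftrightarrow> z < y"
  shows "ok x zs = ok y zs"
proof -
  have e: "j < length zs \<Longrightarrow> (zs ! j < x) = (zs ! j < y)" for j using h nth_mem by blast
  have "(\<exists>j k. j + 1 < k \<and> k < length zs \<and> zs ! j < x \<and> zs ! k < x) =
        (\<exists>j k. j + 1 < k \<and> k < length zs \<and> zs ! j < y \<and> zs ! k < y)"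
  proof
    assume "\<exists>j k. j + 1 < k \<and> k < length zs \<and> zs ! j < x \<and> zs ! k < x"
    then obtain j k where "j + 1 < k" "k < length zs" "zs ! j < x" "zs ! k < x" by blast
    moreover have "j < length zs" using calculation by linarith
    ultimately show "\<exists>j k. j + 1 < k \<and> k < length zs \<and> zs ! j < y \<and> zs ! k < y" using e by blast
  next
    assume "\<exists>j k. j + 1 < k \<and> k < length zs \<and> zs ! j < y \<and> zs ! k < y"
    then obtain j k where "j + 1 < k" "k < length zs" "zs ! j < y" "zs ! k < y" by blast
    moreover have "j < length zs" using calculation by linarith
    ultimately show "\<exists>j k. j + 1 < k \<and> k < length zs \<and> zs ! j < x \<and> zs ! k < x" using e by blast
  qed
  then show ?thesis unfolding ok_def by simp
qed

lemma ok_Cons_ge: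
  assumes "y \<ge> x"
  shows "ok x (y # zs) = ok x zs"
proof
  assume o: "ok x (y # zs)"
  show "ok x zs" unfolding ok_def
  proof
    assume "\<exists>j k. j + 1 < k \<and> k < length zs \<and> zs ! j < x \<and> zs ! k < x"
    then obtain j k where h: "j + 1 < k" "k < length zs" "zs ! j < x" "zs ! k < x" by blast
    have "Suc j + 1 < Suc k \<and> Suc k < length (y # zs) \<and> (y # zs) ! Suc j < x \<and> (y # zs) ! Suc k < x"
      using h by simp
    then show False using o unfolding ok_def by blast
  qed
next
  assume o: "ok x zs"
  show "ok x (y # zs)" unfolding ok_def
  proof
    assume "\<exists>j k. j + 1 < k \<and> k < length (y # zs) \<and> (y # zs) ! j < x \<and> (y # zs) ! k < x"
    then obtain j k where h: "j + 1 < k" "k < length (y # zs)" "(y # zs) ! j < x" "(y # zs) ! k < x" by blast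
    obtain j' where j: "j = Suc j'" using h(3) assms by (cases j) auto
    obtain k' where k: "k = Suc k'" using h(1) by (cases k) auto
    show False using o h unfolding ok_def j k by auto
  qed
qed

lemma ok_Cons_lt:
  assumes "y < x" "distinct zs" "{z \<in> set zs. z < x} = {y'}"
  shows "ok x (y # zs) \<longleftrightarrow> zs \<noteq> [] \<and> hd zs = y'"
proof -
  have "y' \<in> set zs" "y' < x" using assms(3) by auto
  then obtain p where p: "p < length zs" "zs ! p = y'" by (auto simp: in_set_conv_nth)
  have uniq: "q = p" if "q < length zs" "zs ! q < x" for q
  proof -
    have "zs ! q \<in> {z \<in> set zs. z < x}" using that by auto
    then have "zs ! q = zs ! p" using assms(3) p by auto
    then show ?thesis using that p assms(2) nth_eq_iff_index_eq by metis
  qed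
  show ?thesis
  proof
    assume o: "ok x (y # zs)"
    have "p = 0"
    proof (rule ccontr)
      assume "p \<noteq> 0"
      then have "0 + 1 < Suc p \<and> Suc p < length (y # zs) \<and> (y # zs) ! 0 < x \<and> (y # zs) ! Suc p < x"
        using p assms(1) \<open>y' < x\<close> by auto
      then show False using o unfolding ok_def by blast
    qed
    then show "zs \<noteq> [] \<and> hd zs = y'" using p by (cases zs) auto
  next
    assume "zs \<noteq> [] \<and> hd zs = y'"
    then have "p = 0" using uniq[of 0] \<open>y' < x\<close> by (cases zs) auto
    show "ok x (y # zs)" unfolding ok_def
    proof
      assume "\<exists>j k. j + 1 < k \<and> k < length (y # zs) \<and> (y # zs) ! j < x \<and> (y # zs) ! k < x"
      then obtain j k where h: "j + 1 < k" "k < length (y # zs)" "(y # zs) ! j < x" "(y # zs) ! k < x" by blast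
      obtain k' where k: "k = Suc k'" using h(1) by (cases k) auto
      have "k' = p" using uniq[of k'] h unfolding k by auto
      then show False using h \<open>p = 0\<close> unfolding k by auto
    qed
  qed
qed

lemma hd_decomp:
  assumes "c \<in> U" "{z \<in> U. z < c} = {}"
  shows "{zs \<in> AA U. zs \<noteq> [] \<and> hd zs = c} = Cons c ` AA (U - {c})"
proof (intro equalityI subsetI)
  fix zs assume zs: "zs \<in> {zs \<in> AA U. zs \<noteq> [] \<and> hd zs = c}"
  then obtain ws where w: "zs = c # ws" by (cases zs) auto
  show "zs \<in> Cons c ` AA (U - {c})" using zs unfolding w AA_def by auto
next
  fix zs assume "zs \<in> Cons c ` AA (U - {c})"
  then obtain ws where w: "zs = c # ws" "ws \<in> AA (U - {c})" by auto
  have "{z \<in> set ws. z < c} = {}" using w assms(2) unfolding AA_def by auto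
  then have c0: "card {z \<in> set ws. z < c} = 0" by simp
  have dw: "distinct ws" using w(2) unfolding AA_def by auto
  have "ok c ws" by (intro ok_triv[OF dw]) (use c0 in linarith)
  then show "zs \<in> {zs \<in> AA U. zs \<noteq> [] \<and> hd zs = c}" using w assms(1) unfolding AA_def by auto
qed

lemma rank_bij:
  assumes "finite (S :: nat set)"
  shows "bij_betw (\<lambda>x. card {y \<in> S. y < x}) S {..<card S}"
proof -
  let ?r = "\<lambda>x. card {y \<in> S. y < x}"
  have inj: "inj_on ?r S"
  proof (rule inj_onI)
    fix x x' assume xs: "x \<in> S" "x' \<in> S" "?r x = ?r x'"
    show "x = x'"
    proof (rule ccontr)
      assume "x \<noteq> x'"
      then consider "x < x'" | "x' < x" by linarith
      then show False
      proof cases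
        case 1
        have "{y \<in> S. y < x} \<subset> {y \<in> S. y < x'}" using 1 xs by auto
        then have "?r x < ?r x'" using assms by (intro psubset_card_mono) auto
        then show False using xs by simp
      next
        case 2
        have "{y \<in> S. y < x'} \<subset> {y \<in> S. y < x}" using 2 xs by auto
        then have "?r x' < ?r x" using assms by (intro psubset_card_mono) auto
        then show False using xs by simp
      qed
    qed
  qed
  have sub: "?r ` S \<subseteq> {..<card S}"
  proof
    fix t assume "t \<in> ?r ` S"
    then obtain x where "x \<in> S" "t = ?r x" by auto
    then have "{y \<in> S. y < x} \<subset> S" by auto
    then show "t \<in> {..<card S}" using assms \<open>t = ?r x\<close> by (simp add: psubset_card_mono)
  qed
  have "card (?r ` S) = card S" using inj by (simp add: card_image)
  then have "?r ` S = {..<card S}" using sub by (intro card_subset_eq) auto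
  then show ?thesis using inj by (simp add: bij_betw_def)
qed

lemma sum_rank:
  assumes "finite (S :: nat set)"
  shows "(\<Sum>c\<in>S. g (card {z \<in> S. z < c})) = (\<Sum>r<card S. g r)"
  using sum.reindex_bij_betw[OF rank_bij[OF assms], of g] .

lemma sum_g:
  "(\<Sum>r<(n::nat). (if r \<le> 1 then A else if r = 2 then B else 0)) =
     (if 1 \<le> n then A else 0) + (if 2 \<le> n then A else 0) + (if 3 \<le> n then (B::nat) else 0)"
proof (induction n)
  case 0 then show ?case by simp
next
  case (Suc n)
  show ?case unfolding sum.lessThan_Suc Suc.IH by auto
qed

lemma main:
  "\<forall>S. finite S \<and> card S = n \<longrightarrow> card (AA S) = aa n \<and>
     (\<forall>x. x \<notin> S \<and> card {z \<in> S. z < x} = 2 \<longrightarrow> card {ys \<in> AA S. ok x ys} = bb n)"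
proof (induction n rule: less_induct)
  case (less n)
  show ?case
  proof (intro allI impI, rule conjI)
    fix S :: "nat set" assume S: "finite S \<and> card S = n"
    show "card (AA S) = aa n"
    proof (cases n)
      case 0
      then have "S = {}" using S by auto
      then have "AA S = {[]}" unfolding AA_def by auto
      then show ?thesis using 0 by simp
    next
      case (Suc m)
      then have ne: "S \<noteq> {}" using S by auto
      let ?g = "\<lambda>r. if r \<le> 1 then aa m else if r = 2 then bb m else 0"
      have "card (AA S) = card {ys \<in> AA S. True}" by simp
      also have "\<dots> = (\<Sum>c\<in>S. card {zs \<in> AA (S - {c}). ok c zs \<and> True})"
        using S ne by (intro card_decomp) auto
      also have "\<dots> = (\<Sum>c\<in>S. ?g (card {z \<in> S. z < c}))"
      proof (intro sum.cong refl)
        fix c assume c: "c \<in> S"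
        have cm: "card (S - {c}) = m" using S c Suc by simp
        have fS: "finite (S - {c})" using S by auto
        have sets: "{z \<in> set zs. z < c} = {z \<in> S. z < c}" if "zs \<in> AA (S - {c})" for zs
          using that unfolding AA_def by auto
        have dist: "distinct zs" if "zs \<in> AA (S - {c})" for zs
          using that unfolding AA_def by auto
        consider "card {z \<in> S. z < c} \<le> 1" | "card {z \<in> S. z < c} = 2" | "card {z \<in> S. z < c} \<ge> 3"
          by linarith
        then show "card {zs \<in> AA (S - {c}). ok c zs \<and> True} = ?g (card {z \<in> S. z < c})"
        proof cases
          case 1
          have "{zs \<in> AA (S - {c}). ok c zs \<and> True} = AA (S - {c})"
          proof (intro equalityI subsetI)
            fix zs assume "zs \<in> AA (S - {c})"
            then show "zs \<in> {zs \<in> AA (S - {c}). ok c zs \<and> True}"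
              using ok_triv[OF dist, of zs c] sets[of zs] 1 by simp
          qed simp
          then show ?thesis using 1 less.IH[of m] Suc fS cm by auto
        next
          case 2
          have "{z \<in> S - {c}. z < c} = {z \<in> S. z < c}" by auto
          then have "card {zs \<in> AA (S - {c}). ok c zs} = bb m"
            using 2 less.IH[of m] Suc fS cm by auto
          then show ?thesis using 2 by simp
        next
          case 3
          have e: "{zs \<in> AA (S - {c}). ok c zs \<and> True} = {}"
            using ok_fail dist sets 3 by auto
          have g3: "?g (card {z \<in> S. z < c}) = 0" using 3 by simp
          show ?thesis unfolding e g3 by simp
        qed
      qed
      also have "\<dots> = (\<Sum>r<card S. ?g r)" using S by (intro sum_rank) auto
      also have "\<dots> = aa n"
        unfolding sum_g using S Suc by (cases m; cases "m = 1") auto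
      finally show ?thesis .
    qed
  next
    fix S :: "nat set" assume S: "finite S \<and> card S = n"
    show "\<forall>x. x \<notin> S \<and> card {z \<in> S. z < x} = 2 \<longrightarrow> card {ys \<in> AA S. ok x ys} = bb n"
    proof (intro allI impI)
      fix x assume x: "x \<notin> S \<and> card {z \<in> S. z < x} = 2"
      have "card {z \<in> S. z < x} \<le> card S" using S by (intro card_mono) auto
      then obtain m where Suc: "n = Suc m" "m \<ge> 1" using S x by (cases n) auto
      then have ne: "S \<noteq> {}" using S by auto
      let ?g = "\<lambda>r. if r \<le> 1 then aa (m - 1) else if r = 2 then bb m else 0"
      have "card {ys \<in> AA S. ok x ys} = (\<Sum>y\<in>S. card {zs \<in> AA (S - {y}). ok y zs \<and> ok x (y # zs)})"
        using S ne by (intro card_decomp) auto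
      also have "\<dots> = (\<Sum>y\<in>S. ?g (card {z \<in> S. z < y}))"
      proof (intro sum.cong refl)
        fix y assume y: "y \<in> S"
        have cm: "card (S - {y}) = m" using S y Suc by simp
        have fS: "finite (S - {y})" using S by auto
        have sets: "{z \<in> set zs. z < y} = {z \<in> S. z < y}" if "zs \<in> AA (S - {y})" for zs
          using that unfolding AA_def by auto
        have dist: "distinct zs" if "zs \<in> AA (S - {y})" for zs
          using that unfolding AA_def by auto
        consider "card {z \<in> S. z < y} \<le> 1" | "card {z \<in> S. z < y} = 2" | "card {z \<in> S. z < y} \<ge> 3"
          by linarith
        then show "card {zs \<in> AA (S - {y}). ok y zs \<and> ok x (y # zs)} = ?g (card {z \<in> S. z < y})"
        proof cases
          case 1
          have yx: "y < x"
          proof (rule ccontr)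
            assume "\<not> y < x"
            then have "{z \<in> S. z < x} \<subseteq> {z \<in> S. z < y}" by auto
            then have "card {z \<in> S. z < x} \<le> card {z \<in> S. z < y}" using S by (intro card_mono) auto
            then show False using 1 x by simp
          qed
          have "y \<in> {z \<in> S. z < x}" using y yx by auto
          moreover have "card ({z \<in> S. z < x} - {y}) = 1"
            using x \<open>y \<in> {z \<in> S. z < x}\<close> S by simp
          then obtain y' where y'0: "{z \<in> S. z < x} - {y} = {y'}" by (rule card_1_singletonE)
          ultimately have y': "{z \<in> S. z < x} = {y, y'}" "y' \<noteq> y" by auto
          have y'S: "y' \<in> S - {y}" "y' < x" using y' by auto
          have setx: "{z \<in> set zs. z < x} = {y'}" if "zs \<in> AA (S - {y})" for zs
            using that y' unfolding AA_def by auto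
          have "{zs \<in> AA (S - {y}). ok y zs \<and> ok x (y # zs)} = {zs \<in> AA (S - {y}). zs \<noteq> [] \<and> hd zs = y'}"
          proof (rule Collect_cong)
            fix zs
            show "(zs \<in> AA (S - {y}) \<and> ok y zs \<and> ok x (y # zs)) = (zs \<in> AA (S - {y}) \<and> zs \<noteq> [] \<and> hd zs = y')"
            proof (cases "zs \<in> AA (S - {y})")
              case True
              have "ok y zs" using ok_triv[OF dist[OF True]] sets[OF True] 1 by simp
              moreover have "ok x (y # zs) = (zs \<noteq> [] \<and> hd zs = y')"
                by (rule ok_Cons_lt[OF yx dist[OF True] setx[OF True]])
              ultimately show ?thesis using True by simp
            qed simp
          qed
          also have "\<dots> = Cons y' ` AA (S - {y} - {y'})"
          proof (rule hd_decomp[OF y'S(1)])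
            show "{z \<in> S - {y}. z < y'} = {}"
            proof (rule ccontr)
              assume "{z \<in> S - {y}. z < y'} \<noteq> {}"
              then obtain z where z: "z \<in> S" "z \<noteq> y" "z < y'" by auto
              then have "z \<in> {z \<in> S. z < x}" using y'S by auto
              then show False using y' z by auto
            qed
          qed
          finally have "card {zs \<in> AA (S - {y}). ok y zs \<and> ok x (y # zs)} = card (AA (S - {y} - {y'}))"
            by (simp add: card_image)
          also have "\<dots> = aa (m - 1)"
          proof -
            have "card (S - {y} - {y'}) = m - 1" using cm y'S fS by auto
            then show ?thesis using less.IH[of "m - 1"] Suc fS by auto
          qed
          finally show ?thesis using 1 by simp
        next
          case 2
          have same: "{z \<in> S. z < y} = {z \<in> S. z < x}"
          proof (cases "x < y")
            case True
            have "{z \<in> S. z < x} \<subseteq> {z \<in> S. z < y}" using True by auto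
            then show ?thesis using 2 x S by (intro card_subset_eq[symmetric]) auto
          next
            case False
            then have "y < x" using x y by (cases "x = y") auto
            then have "{z \<in> S. z < y} \<subseteq> {z \<in> S. z < x} - {y}" by auto
            then have "card {z \<in> S. z < y} \<le> card ({z \<in> S. z < x} - {y})" using S by (intro card_mono) auto
            also have "\<dots> = 1" using x y \<open>y < x\<close> by simp
            finally show ?thesis using 2 by simp
          qed
          have xy: "x \<le> y"
          proof (rule ccontr)
            assume "\<not> x \<le> y"
            then have "y \<in> {z \<in> S. z < x}" using y by auto
            then show False using same by auto
          qed
          have "{zs \<in> AA (S - {y}). ok y zs \<and> ok x (y # zs)} = {zs \<in> AA (S - {y}). ok y zs}"
          proof (intro Collect_cong conj_cong refl)
            fix zs assume "zs \<in> AA (S - {y})"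
            then have "\<forall>z\<in>set zs. z < x \<longleftrightarrow> z < y" using same unfolding AA_def by blast
            then show "(ok y zs \<and> ok x (y # zs)) = ok y zs"
              using ok_Cons_ge[OF xy] ok_cong by metis
          qed
          also have "card \<dots> = bb m"
          proof -
            have "{z \<in> S - {y}. z < y} = {z \<in> S. z < y}" by auto
            then show ?thesis using 2 less.IH[of m] Suc fS cm by auto
          qed
          finally show ?thesis using 2 by simp
        next
          case 3
          have e: "{zs \<in> AA (S - {y}). ok y zs \<and> ok x (y # zs)} = {}"
            using ok_fail dist sets 3 by auto
          have g3: "?g (card {z \<in> S. z < y}) = 0" using 3 by simp
          show ?thesis unfolding e g3 by simp
        qed
      qed
      also have "\<dots> = (\<Sum>r<card S. ?g r)" using S by (intro sum_rank) auto
      also have "\<dots> = bb n"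
      proof -
        obtain m' where m': "m = Suc m'" using Suc(2) by (cases m) auto
        show ?thesis unfolding sum_g using S Suc m' by (cases m') auto
      qed
      finally show "card {ys \<in> AA S. ok x ys} = bb n" .
    qed
  qed
qed


lemma aa_rec': "int (aa (Suc (Suc (Suc n)))) = 3 * int (aa (Suc (Suc n))) - 2 * int (aa (Suc n)) + 2 * int (aa n)"
proof -
  have 1: "aa (Suc (Suc (Suc n))) = 2 * aa (Suc (Suc n)) + bb (Suc (Suc n))"
    by (subst aa.simps(2)) (simp del: aa.simps bb.simps)
  have 2: "bb (Suc (Suc n)) = 2 * aa n + bb (Suc n)"
    by (rule bb.simps(3))
  have 3: "aa (Suc (Suc n)) = 2 * aa (Suc n) + bb (Suc n)"
    by (subst aa.simps(2)) (simp del: aa.simps bb.simps)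
  show ?thesis using 1 2 3 by (simp del: aa.simps bb.simps)
qed

lemma aa_rec: "int (aa (n+3)) = 3 * int (aa (n+2)) - 2 * int (aa (n+1)) + 2 * int (aa n)"
  using aa_rec'[of n] by (simp add: numeral_3_eq_3 numeral_2_eq_2 del: aa.simps bb.simps)

lemma nth_num: "fps_nth (numeral k * (f :: rat fps)) n = numeral k * fps_nth f n"
proof -
  have "numeral k * f = fps_const (numeral k) * f" by (simp only: numeral_fps_const)
  then show ?thesis by (simp only: fps_mult_left_const_nth)
qed

lemma fps_part:
  "Abs_fps (\<lambda>n. of_nat (aa n) :: rat)
         = (1 - fps_X) ^ 2 / (1 - 3 * fps_X + 2 * fps_X ^ 2 - 2 * fps_X ^ 3)"
proof -
  define f where "f = Abs_fps (\<lambda>n. of_nat (aa n) :: rat)"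
  define D :: "rat fps" where "D = 1 - 3 * fps_X + 2 * fps_X ^ 2 - 2 * fps_X ^ 3"
  have eq: "f * D = f - 3 * (fps_X * f) + 2 * (fps_X ^ 2 * f) - 2 * (fps_X ^ 3 * f)"
    unfolding D_def by (simp add: algebra_simps)
  have "f * D = (1 - fps_X) ^ 2"
  proof (rule fps_ext)
    fix n
    show "fps_nth (f * D) n = fps_nth ((1 - fps_X) ^ 2 :: rat fps) n"
    proof -
      have sq: "((1 - fps_X) ^ 2 :: rat fps) = 1 - 2 * fps_X + fps_X ^ 2"
        by (simp add: power2_eq_square algebra_simps)
      have "n = 0 \<or> n = 1 \<or> n = 2 \<or> (\<exists>m. n = m + 3)" by presburger
      then consider "n = 0" | "n = 1" | "n = 2" | m where "n = m + 3" by blast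
      then show ?thesis
      proof cases
        case 1 then show ?thesis unfolding eq sq by (simp add: mult.assoc nth_num fps_numeral_nth f_def fps_X_power_mult_nth)
      next
        case 2 then show ?thesis unfolding eq sq by (simp add: mult.assoc nth_num fps_numeral_nth f_def fps_X_power_mult_nth fps_X_power_nth)
      next
        case 3 then show ?thesis unfolding eq sq by (simp add: mult.assoc nth_num fps_numeral_nth f_def fps_X_power_mult_nth fps_X_power_nth numeral_2_eq_2)
      next
        case 4
        have r: "of_int (int (aa (m+3))) = (of_int (3 * int (aa (m+2)) - 2 * int (aa (m+1)) + 2 * int (aa m)) :: rat)"
          using aa_rec[of m] by (simp del: aa.simps bb.simps)
        have "fps_nth (f * D) n = of_nat (aa (m+3)) - 3 * of_nat (aa (m+2)) + 2 * of_nat (aa (m+1)) - 2 * of_nat (aa m)"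
          unfolding eq 4 by (simp add: nth_num f_def fps_X_power_mult_nth del: aa.simps bb.simps)
        also have "\<dots> = 0" using r by (simp del: aa.simps bb.simps)
        finally show ?thesis unfolding sq 4 by (simp add: nth_num fps_numeral_nth fps_X_power_nth del: aa.simps bb.simps)
      qed
    qed
  qed
  moreover have "D \<noteq> 0"
  proof
    assume "D = 0"
    then have "fps_nth D 0 = 0" by simp
    then show False unfolding D_def by simp
  qed
  ultimately have "(1 - fps_X) ^ 2 / D = f"
    using nonzero_mult_div_cancel_right[of D f] by simp
  then show ?thesis unfolding f_def D_def by (rule sym)
qed


theorem theorem3p8:
  shows "Abs_fps (\<lambda>n. of_nat (card (avoiders 4 {(1, 2), (1, 4)} n)) :: rat)
         = (1 - fps_X) ^ 2 / (1 - 3 * fps_X + 2 * fps_X ^ 2 - 2 * fps_X ^ 3)"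
proof -
  have "card (avoiders 4 {(1, 2), (1, 4)} n) = aa n" for n
  proof -
    have fc: "finite {1..n} \<and> card {1..n} = n" by simp
    have "card (AA {1..n}) = aa n" using main[of n] fc by blast
    then show ?thesis unfolding avoiders_AA .
  qed
  then show ?thesis using fps_part by simp
qed

end
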